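(* The logics $\mathrm{E4}$, $\mathrm{S04}$ and $\mathrm{EMC4}$ have the finite model property, i.e. for each of them there is a class of finite neighborhood frames such that the theorems of the logic are exactly the formulas valid on all frames of that class.
   Context: Modal formulas are built from a countable set $Var$ of propositional variables using $\neg$, $\wedge$ and the unary operator $\Box$. A (modal) logic is a set of formulas containing all classical tautologies and closed under modus ponens, uniform substitution, and the rule (RE): from $\varphi\leftrightarrow\psi$ infer $\Box\varphi\leftrightarrow\Box\psi$. $\mathrm{E}$ is the smallest logic; $\mathrm{L}+\Gamma$ is the smallest logic containing $\mathrm{L}\cup\Gamma$. Axioms: $(4)\ \Box p\to\Box\Box p$; $(\mathrm{T})\ \Box p\to p$; $(\mathrm{M})\ \Box(p\wedge q)\to(\Box p\wedge\Box q)$; $(\mathrm{C})\ (\Box p\wedge\Box q)\to\Box(p\wedge q)$. $\mathrm{E4}=\mathrm{E}+4$, $\mathrm{EMC4}=\mathrm{E4}+\mathrm{M}+\mathrm{C}$, $\mathrm{S04}=\mathrm{E4}+\mathrm{T}+\mathrm{M}$. A neighborhood frame is a pair $(W,\bm{\Box})$ with $W\neq\varnothing$ and $\bm{\Box}:\mathcal P(W)\to\mathcal P(W)$; it is finite if $W$ is finite. A model on it adds a valuation $V:Var\to\mathcal P(W)$. Truth sets: $|p|_M=V(p)$, $|\neg\varphi|_M=W\setminus|\varphi|_M$, $|\varphi\wedge\psi|_M=|\varphi|_M\cap|\psi|_M$, $|\Box\varphi|_M=\bm{\Box}|\varphi|_M$. $\varphi$ is valid on a frame if $|\varphi|_M=W$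 for every model $M$ on it. *)

theory Defs
  imports Main
begin

datatype fm = Var nat | Neg fm | Conj fm fm | Box fm

definition Imp :: "fm \<Rightarrow> fm \<Rightarrow> fm" where
  "Imp a b = Neg (Conj a (Neg b))"

definition Iff :: "fm \<Rightarrow> fm \<Rightarrow> fm" where
  "Iff a b = Conj (Imp a b) (Imp b a)"

fun peval :: "(fm \<Rightarrow> bool) \<Rightarrow> fm \<Rightarrow> bool" where
  "peval v (Var n) = v (Var n)"
| "peval v (Neg a) = (\<not> peval v a)"
| "peval v (Conj a b) = (peval v a \<and> peval v b)"
| "peval v (Box a) = v (Box a)"

definition tautology :: "fm \<Rightarrow> bool" where
  "tautology a = (\<forall>v. peval v a)"

fun subst :: "(nat \<Rightarrow> fm) \<Rightarrow> fm \<Rightarrow> fm" where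
  "subst s (Var n) = s n"
| "subst s (Neg a) = Neg (subst s a)"
| "subst s (Conj a b) = Conj (subst s a) (subst s b)"
| "subst s (Box a) = Box (subst s a)"

definition is_logic :: "fm set \<Rightarrow> bool" where
  "is_logic L \<longleftrightarrow>
     (\<forall>a. tautology a \<longrightarrow> a \<in> L)
   \<and> (\<forall>a b. a \<in> L \<longrightarrow> Imp a b \<in> L \<longrightarrow> b \<in> L)
   \<and> (\<forall>a s. a \<in> L \<longrightarrow> subst s a \<in> L)
   \<and> (\<forall>a b. Iff a b \<in> L \<longrightarrow> Iff (Box a) (Box b) \<in> L)"

definition lplus :: "fm set \<Rightarrow> fm set \<Rightarrow> fm set" where
  "lplus L \<Gamma> = \<Inter>{L'. is_logic L' \<and> L \<union> \<Gamma> \<subseteq> L'}"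

definition ax4 :: fm where "ax4 = Imp (Box (Var 0)) (Box (Box (Var 0)))"
definition axT :: fm where "axT = Imp (Box (Var 0)) (Var 0)"
definition axM :: fm where
  "axM = Imp (Box (Conj (Var 0) (Var 1))) (Conj (Box (Var 0)) (Box (Var 1)))"
definition axC :: fm where
  "axC = Imp (Conj (Box (Var 0)) (Box (Var 1))) (Box (Conj (Var 0) (Var 1)))"

definition E :: "fm set" where "E = lplus {} {}"
definition E4 :: "fm set" where "E4 = lplus E {ax4}"
definition EMC4 :: "fm set" where "EMC4 = lplus E4 {axM, axC}"
definition S04 :: "fm set" where "S04 = lplus E4 {axT, axM}"

type_synonym frame = "nat set \<times> (nat set \<Rightarrow> nat set)"

definition is_frame :: "frame \<Rightarrow> bool" where
  "is_frame F \<longleftrightarrow> fst F \<noteq> {} \<and> (\<forall>X. X \<subseteq> fst F \<longrightarrow> snd F X \<subseteq> fst F)"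

definition finite_frame :: "frame \<Rightarrow> bool" where
  "finite_frame F \<longleftrightarrow> is_frame F \<and> finite (fst F)"

fun tset :: "frame \<Rightarrow> (nat \<Rightarrow> nat set) \<Rightarrow> fm \<Rightarrow> nat set" where
  "tset F V (Var p) = V p"
| "tset F V (Neg a) = fst F - tset F V a"
| "tset F V (Conj a b) = tset F V a \<inter> tset F V b"
| "tset F V (Box a) = snd F (tset F V a)"

definition valid :: "frame \<Rightarrow> fm \<Rightarrow> bool" where
  "valid F a \<longleftrightarrow> (\<forall>V. (\<forall>p. V p \<subseteq> fst F) \<longrightarrow> tset F V a = fst F)"

definition has_fmp :: "fm set \<Rightarrow> bool" where
  "has_fmp L \<longleftrightarrow> (\<exists>C. (\<forall>F\<in>C. finite_frame F) \<and> (\<forall>a. a \<in> L \<longleftrightarrow> (\<forall>F\<in>C. valid F a)))"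

end

theory Submission
  imports Defs
begin

fun gts :: "'a set \<Rightarrow> ('a set \<Rightarrow> 'a set) \<Rightarrow> (nat \<Rightarrow> 'a set) \<Rightarrow> fm \<Rightarrow> 'a set" where
  "gts W B V (Var p) = V p"
| "gts W B V (Neg a) = W - gts W B V a"
| "gts W B V (Conj a b) = gts W B V a \<inter> gts W B V b"
| "gts W B V (Box a) = B (gts W B V a)"

definition gvalid :: "'a set \<Rightarrow> ('a set \<Rightarrow> 'a set) \<Rightarrow> fm \<Rightarrow> bool" where
  "gvalid W B a \<longleftrightarrow> (\<forall>V. (\<forall>p. V p \<subseteq> W) \<longrightarrow> gts W B V a = W)"

lemma gts_sub: "\<forall>X\<subseteq>W. B X \<subseteq> W \<Longrightarrow> \<forall>p. V p \<subseteq> W \<Longrightarrow> gts W B V a \<subseteq> W"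
  by (induction a) auto

lemma gts_Imp: "gts W B V (Imp a b) = W - (gts W B V a - gts W B V b)"
  by (auto simp: Imp_def)

lemma gts_subst: "gts W B V (subst s a) = gts W B (\<lambda>n. gts W B V (s n)) a"
  by (induction a) auto

lemma peval_gts:
  assumes "\<forall>X\<subseteq>W. B X \<subseteq> W" "\<forall>p. V p \<subseteq> W" "w \<in> W"
  shows "peval (\<lambda>x. w \<in> gts W B V x) a = (w \<in> gts W B V a)"
  using assms by (induction a) auto

lemma gvalid_logic:
  assumes fr: "\<forall>X\<subseteq>W. B X \<subseteq> W"
  shows "is_logic {a. gvalid W B a}"
  unfolding is_logic_def
proof (intro conjI allI impI)
  fix a assume ta: "tautology a"
  show "a \<in> {a. gvalid W B a}"
    unfolding gvalid_def
  proof (intro CollectI allI impI)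
    fix V :: "nat \<Rightarrow> 'a set" assume V: "\<forall>p. V p \<subseteq> W"
    have "w \<in> gts W B V a" if "w \<in> W" for w
      using peval_gts[OF fr V that, of a] ta unfolding tautology_def by blast
    with gts_sub[OF fr V, of a] show "gts W B V a = W" by blast
  qed
next
  fix a b assume h: "a \<in> {a. gvalid W B a}" "Imp a b \<in> {a. gvalid W B a}"
  show "b \<in> {a. gvalid W B a}"
    unfolding gvalid_def
  proof (intro CollectI allI impI)
    fix V :: "nat \<Rightarrow> 'a set" assume V: "\<forall>p. V p \<subseteq> W"
    have "gts W B V a = W" "W - (gts W B V a - gts W B V b) = W"
      using h V by (auto simp: gvalid_def gts_Imp)
    with gts_sub[OF fr V, of b] show "gts W B V b = W" by blast
  qed
next
  fix a s assume h: "a \<in> {a. gvalid W B a}"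
  show "subst s a \<in> {a. gvalid W B a}"
    unfolding gvalid_def
  proof (intro CollectI allI impI)
    fix V :: "nat \<Rightarrow> 'a set" assume V: "\<forall>p. V p \<subseteq> W"
    have P: "\<forall>p. gts W B V (s p) \<subseteq> W" using gts_sub[OF fr V] by blast
    have H: "\<forall>V. (\<forall>p. V p \<subseteq> W) \<longrightarrow> gts W B V a = W" using h by (simp add: gvalid_def)
    have "gts W B (\<lambda>n. gts W B V (s n)) a = W" using spec[OF H, of "\<lambda>n. gts W B V (s n)"] P by blast
    then show "gts W B V (subst s a) = W" by (simp add: gts_subst)
  qed
next
  fix a b assume h: "Iff a b \<in> {a. gvalid W B a}"
  show "Iff (Box a) (Box b) \<in> {a. gvalid W B a}"
    unfolding gvalid_def
  proof (intro CollectI allI impI)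
    fix V :: "nat \<Rightarrow> 'a set" assume V: "\<forall>p. V p \<subseteq> W"
    have 1: "W - (gts W B V a - gts W B V b) = W" "W - (gts W B V b - gts W B V a) = W"
      using h V by (auto simp: gvalid_def gts_Imp Iff_def)
    have "gts W B V a = gts W B V b"
      using 1 gts_sub[OF fr V, of a] gts_sub[OF fr V, of b] by blast
    then show "gts W B V (Iff (Box a) (Box b)) = W"
      by (auto simp: Iff_def gts_Imp)
  qed
qed

lemma gvalid_ax4:
  assumes "\<forall>X\<subseteq>W. B X \<subseteq> B (B X)" shows "gvalid W B ax4"
  unfolding gvalid_def
proof (intro allI impI)
  fix V :: "nat \<Rightarrow> 'a set" assume "\<forall>p. V p \<subseteq> W"
  then have "B (V 0) \<subseteq> B (B (V 0))" using assms by blast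
  then show "gts W B V ax4 = W" by (auto simp: ax4_def gts_Imp)
qed

lemma gvalid_axT:
  assumes "\<forall>X\<subseteq>W. B X \<subseteq> X" shows "gvalid W B axT"
  unfolding gvalid_def
proof (intro allI impI)
  fix V :: "nat \<Rightarrow> 'a set" assume "\<forall>p. V p \<subseteq> W"
  then have "B (V 0) \<subseteq> V 0" using assms by blast
  then show "gts W B V axT = W" by (auto simp: axT_def gts_Imp)
qed

lemma gvalid_axM:
  assumes "\<forall>X Y. X \<subseteq> Y \<longrightarrow> Y \<subseteq> W \<longrightarrow> B X \<subseteq> B Y" shows "gvalid W B axM"
  unfolding gvalid_def
proof (intro allI impI)
  fix V :: "nat \<Rightarrow> 'a set" assume "\<forall>p. V p \<subseteq> W"
  then have "B (V 0 \<inter> V 1) \<subseteq> B (V 0)" "B (V 0 \<inter> V 1) \<subseteq> B (V 1)" using assms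
    by (meson inf_le1 inf_le2)+
  then show "gts W B V axM = W" by (auto simp: axM_def gts_Imp)
qed

lemma gvalid_axC:
  assumes "\<forall>X Y. X \<subseteq> W \<longrightarrow> Y \<subseteq> W \<longrightarrow> B X \<inter> B Y \<subseteq> B (X \<inter> Y)" shows "gvalid W B axC"
  unfolding gvalid_def
proof (intro allI impI)
  fix V :: "nat \<Rightarrow> 'a set" assume "\<forall>p. V p \<subseteq> W"
  then have "B (V 0) \<inter> B (V 1) \<subseteq> B (V 0 \<inter> V 1)" using assms by blast
  then show "gts W B V axC = W" by (auto simp: axC_def gts_Imp)
qed

lemma transfer:
  fixes W :: "'a set"
  assumes fin: "finite W" and ne: "W \<noteq> {}" and fr: "\<forall>X\<subseteq>W. B X \<subseteq> W"
  shows "\<exists>F. finite_frame F \<and> (\<forall>a. valid F a \<longleftrightarrow> gvalid W B a)"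
proof -
  obtain h :: "'a \<Rightarrow> nat" where h: "inj_on h W"
    using finite_imp_inj_to_nat_seg[OF fin] by blast
  define F where "F = (h ` W, \<lambda>X. h ` B (h -` X \<inter> W))"
  have hh: "h -` (h ` G) \<inter> W = G" if "G \<subseteq> W" for G
    using h that by (auto simp: inj_on_def)
  have key: "tset F V a = h ` gts W B (\<lambda>p. h -` V p \<inter> W) a"
    if V: "\<forall>p. V p \<subseteq> h ` W" for V a
  proof (induction a)
    case (Var p)
    then show ?case using V[rule_format, of p] by (auto simp: F_def)
  next
    case (Neg a)
    let ?G = "gts W B (\<lambda>p. h -` V p \<inter> W) a"
    have G: "?G \<subseteq> W" by (rule gts_sub[OF fr]) blast
    have "h ` (W - ?G) = h ` W - h ` ?G" by (rule inj_on_image_set_diff[OF h]) (use G in auto)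
    then show ?case using Neg.IH by (simp add: F_def)
  next
    case (Conj a b)
    let ?G = "gts W B (\<lambda>p. h -` V p \<inter> W) a"
    let ?H = "gts W B (\<lambda>p. h -` V p \<inter> W) b"
    have G: "?G \<subseteq> W" by (rule gts_sub[OF fr]) blast
    have H: "?H \<subseteq> W" by (rule gts_sub[OF fr]) blast
    have "h ` (?G \<inter> ?H) = h ` ?G \<inter> h ` ?H" by (rule inj_on_image_Int[OF h G H])
    then show ?case using Conj.IH by simp
  next
    case (Box a)
    let ?G = "gts W B (\<lambda>p. h -` V p \<inter> W) a"
    have G: "?G \<subseteq> W" by (rule gts_sub[OF fr]) blast
    have "tset F V (Box a) = h ` B (h -` (h ` ?G) \<inter> W)" using Box.IH by (simp add: F_def)
    also have "h -` (h ` ?G) \<inter> W = ?G" by (rule hh[OF G])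
    finally show ?case by simp
  qed
  have "finite_frame F"
    unfolding finite_frame_def is_frame_def F_def fst_conv snd_conv
  proof (intro conjI allI impI)
    fix X :: "nat set"
    have "B (h -` X \<inter> W) \<subseteq> W" using fr by blast
    then show "h ` B (h -` X \<inter> W) \<subseteq> h ` W" by (rule image_mono)
  qed (use fin ne in auto)
  moreover have "valid F a \<longleftrightarrow> gvalid W B a" for a
  proof
    assume va: "valid F a"
    show "gvalid W B a" unfolding gvalid_def
    proof (intro allI impI)
      fix V' :: "nat \<Rightarrow> 'a set" assume V': "\<forall>p. V' p \<subseteq> W"
      define V where "V = (\<lambda>p. h ` V' p)"
      have Vs: "\<forall>p. V p \<subseteq> h ` W" using V' by (auto simp: V_def)
      have VV: "(\<lambda>p. h -` V p \<inter> W) = V'" using hh V' by (auto simp: V_def)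
      have "tset F V a = fst F" using va Vs by (auto simp: valid_def F_def)
      then have "h ` gts W B V' a = h ` W" using key[OF Vs, of a] VV by (simp add: F_def)
      then show "gts W B V' a = W"
        using inj_on_image_eq_iff[OF h gts_sub[OF fr V'] order_refl] by blast
    qed
  next
    assume va: "gvalid W B a"
    show "valid F a" unfolding valid_def
    proof (intro allI impI)
      fix V :: "nat \<Rightarrow> nat set" assume V: "\<forall>p. V p \<subseteq> fst F"
      then have Vs: "\<forall>p. V p \<subseteq> h ` W" by (simp add: F_def)
      have "gts W B (\<lambda>p. h -` V p \<inter> W) a = W" using va by (auto simp: gvalid_def)
      then show "tset F V a = fst F" using key[OF Vs, of a] by (simp add: F_def)
    qed
  qed
  ultimately show ?thesis by blast
qed

lemma fmp_intro:
  assumes "\<And>a. a \<notin> Lg \<Longrightarrow> \<exists>(W::fm set set) B. finite W \<and> W \<noteq> {} \<and> (\<forall>X\<subseteq>W. B X \<subseteq> W)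
              \<and> (\<forall>b\<in>Lg. gvalid W B b) \<and> \<not> gvalid W B a"
  shows "has_fmp Lg"
  unfolding has_fmp_def
proof (intro exI[of _ "{F. finite_frame F \<and> (\<forall>b\<in>Lg. valid F b)}"] conjI allI)
  show "\<forall>F\<in>{F. finite_frame F \<and> (\<forall>b\<in>Lg. valid F b)}. finite_frame F" by blast
  fix a
  show "(a \<in> Lg) = (\<forall>F\<in>{F. finite_frame F \<and> (\<forall>b\<in>Lg. valid F b)}. valid F a)"
  proof (cases "a \<in> Lg")
    case False
    from assms[OF False] obtain W :: "fm set set" and B where WB0: "finite W \<and> W \<noteq> {} \<and> (\<forall>X\<subseteq>W. B X \<subseteq> W)
      \<and> (\<forall>b\<in>Lg. gvalid W B b) \<and> \<not> gvalid W B a" by blast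
    then have WB: "finite W" "W \<noteq> {}" "\<forall>X\<subseteq>W. B X \<subseteq> W"
      "\<forall>b\<in>Lg. gvalid W B b" "\<not> gvalid W B a" by auto
    obtain F where FF: "finite_frame F" "\<forall>a. valid F a \<longleftrightarrow> gvalid W B a"
      using transfer[OF WB(1-3)] by blast
    have "F \<in> {F. finite_frame F \<and> (\<forall>b\<in>Lg. valid F b)}" using FF WB(4) by blast
    moreover have "\<not> valid F a" using FF WB(5) by blast
    ultimately show ?thesis using False by blast
  qed blast
qed


fun sub :: "fm \<Rightarrow> fm set" where
  "sub (Var n) = {Var n}"
| "sub (Neg a) = insert (Neg a) (sub a)"
| "sub (Conj a b) = insert (Conj a b) (sub a \<union> sub b)"
| "sub (Box a) = insert (Box a) (sub a)"

fun atoms :: "fm \<Rightarrow> fm set" where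
  "atoms (Var n) = {Var n}"
| "atoms (Neg a) = atoms a"
| "atoms (Conj a b) = atoms a \<union> atoms b"
| "atoms (Box a) = {Box a}"

lemma finite_sub: "finite (sub a)" by (induction a) auto
lemma finite_atoms: "finite (atoms a)" by (induction a) auto
lemma sub_refl: "a \<in> sub a" by (cases a) auto
lemma sub_trans: "b \<in> sub a \<Longrightarrow> sub b \<subseteq> sub a" by (induction a) auto
lemma peval_atoms: "\<forall>x\<in>atoms a. v x = u x \<Longrightarrow> peval v a = peval u a"
  by (induction a) auto
lemma atoms_atom: "x \<in> atoms a \<Longrightarrow> peval v x = v x"
  by (induction a) auto
lemma atoms_Imp[simp]: "atoms (Imp a b) = atoms a \<union> atoms b" by (simp add: Imp_def)
lemma atoms_Iff[simp]: "atoms (Iff a b) = atoms a \<union> atoms b" by (auto simp: Iff_def)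

definition Top :: fm where "Top = Neg (Conj (Var 0) (Neg (Var 0)))"

fun cj :: "fm list \<Rightarrow> fm" where
  "cj [] = Top"
| "cj [x] = x"
| "cj (x # y # xs) = Conj x (cj (y # xs))"

lemma peval_cj[simp]: "peval v (cj xs) = (\<forall>x\<in>set xs. peval v x)"
  by (induction xs rule: cj.induct) (auto simp: Top_def)
lemma atoms_cj: "xs \<noteq> [] \<Longrightarrow> atoms (cj xs) = \<Union> (atoms ` set xs)"
  by (induction xs rule: cj.induct) auto

lemma peval_Imp[simp]: "peval v (Imp a b) = (peval v a \<longrightarrow> peval v b)"
  by (simp add: Imp_def)
lemma peval_Iff[simp]: "peval v (Iff a b) = (peval v a \<longleftrightarrow> peval v b)"
  by (auto simp: Iff_def)
lemma peval_foldr[simp]: "peval v (foldr Imp ps a) = ((\<forall>p\<in>set ps. peval v p) \<longrightarrow> peval v a)"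
  by (induction ps) auto

lemma logicD:
  assumes "is_logic L"
  shows "tautology a \<Longrightarrow> a \<in> L" "a \<in> L \<Longrightarrow> Imp a b \<in> L \<Longrightarrow> b \<in> L"
    "a \<in> L \<Longrightarrow> subst s a \<in> L" "Iff a b \<in> L \<Longrightarrow> Iff (Box a) (Box b) \<in> L"
  using assms unfolding is_logic_def by blast+

lemma L_mp_list: "is_logic L \<Longrightarrow> set ps \<subseteq> L \<Longrightarrow> foldr Imp ps a \<in> L \<Longrightarrow> a \<in> L"
proof (induction ps)
  case Nil then show ?case by simp
next
  case (Cons p ps)
  have "p \<in> L" "Imp p (foldr Imp ps a) \<in> L" using Cons.prems by auto
  then have "foldr Imp ps a \<in> L" by (rule logicD(2)[OF Cons.prems(1)])
  then show ?case using Cons.IH Cons.prems by simp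
qed

lemma lderiv:
  assumes "is_logic L" "set ps \<subseteq> L" "\<And>v. \<forall>p\<in>set ps. peval v p \<Longrightarrow> peval v a"
  shows "a \<in> L"
proof -
  have "tautology (foldr Imp ps a)" using assms(3) by (auto simp: tautology_def)
  then have "foldr Imp ps a \<in> L" by (rule logicD(1)[OF assms(1)])
  then show ?thesis using L_mp_list assms(1,2) by blast
qed

lemma L_subst: "is_logic L \<Longrightarrow> a \<in> L \<Longrightarrow> subst s a \<in> L"
  by (rule logicD(3))
lemma L_RE: "is_logic L \<Longrightarrow> Iff a b \<in> L \<Longrightarrow> Iff (Box a) (Box b) \<in> L"
  by (rule logicD(4))

lemma inst4: "is_logic L \<Longrightarrow> ax4 \<in> L \<Longrightarrow> Imp (Box a) (Box (Box a)) \<in> L"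
  using L_subst[of L ax4 "\<lambda>n. a"] by (simp add: ax4_def Imp_def)
lemma instT: "is_logic L \<Longrightarrow> axT \<in> L \<Longrightarrow> Imp (Box a) a \<in> L"
  using L_subst[of L axT "\<lambda>n. a"] by (simp add: axT_def Imp_def)
lemma instM: "is_logic L \<Longrightarrow> axM \<in> L \<Longrightarrow> Imp (Box (Conj a b)) (Conj (Box a) (Box b)) \<in> L"
  using L_subst[of L axM "\<lambda>n. if n = 0 then a else b"] by (simp add: axM_def Imp_def)
lemma instC: "is_logic L \<Longrightarrow> axC \<in> L \<Longrightarrow> Imp (Conj (Box a) (Box b)) (Box (Conj a b)) \<in> L"
  using L_subst[of L axC "\<lambda>n. if n = 0 then a else b"] by (simp add: axC_def Imp_def)

lemma RM:
  assumes L: "is_logic L" and M: "axM \<in> L" and ab: "Imp a b \<in> L"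
  shows "Imp (Box a) (Box b) \<in> L"
proof -
  have "Iff a (Conj a b) \<in> L" by (rule lderiv[OF L, of "[Imp a b]"]) (use ab in auto)
  then have 1: "Iff (Box a) (Box (Conj a b)) \<in> L" by (rule L_RE[OF L])
  show ?thesis
    by (rule lderiv[OF L, of "[Iff (Box a) (Box (Conj a b)), Imp (Box (Conj a b)) (Conj (Box a) (Box b))]"])
       (use 1 instM[OF L M] in auto)
qed

lemma MC_cj:
  assumes L: "is_logic L" and M: "axM \<in> L" and C: "axC \<in> L"
  shows "ds \<noteq> [] \<Longrightarrow> Iff (Box (cj ds)) (cj (map Box ds)) \<in> L"
proof (induction ds rule: cj.induct)
  case 1 then show ?case by simp
next
  case (2 x)
  show ?case by (rule lderiv[OF L, of "[]"]) auto
next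
  case (3 x y xs)
  let ?m = "cj (y # xs)"
  have IH: "Iff (Box ?m) (cj (map Box (y # xs))) \<in> L" using 3 by simp
  show ?case
    by (rule lderiv[OF L, of "[Iff (Box ?m) (cj (map Box (y # xs))),
           Imp (Box (Conj x ?m)) (Conj (Box x) (Box ?m)), Imp (Conj (Box x) (Box ?m)) (Box (Conj x ?m))]"])
       (use IH instM[OF L M] instC[OF L C] in auto)
qed

lemma lplus_least: "is_logic X \<Longrightarrow> L \<union> G \<subseteq> X \<Longrightarrow> lplus L G \<subseteq> X"
  unfolding lplus_def by blast
lemma lplus_sup: "L \<union> G \<subseteq> lplus L G"
  unfolding lplus_def by blast
lemma lplus_logic: "is_logic (lplus L G)"
  unfolding lplus_def is_logic_def by (intro conjI allI impI; blast)

lemma E4_logic: "is_logic E4" by (simp add: E4_def lplus_logic)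
lemma S04_logic: "is_logic S04" by (simp add: S04_def lplus_logic)
lemma EMC4_logic: "is_logic EMC4" by (simp add: EMC4_def lplus_logic)

lemma E_least: "is_logic X \<Longrightarrow> E \<subseteq> X" unfolding E_def by (rule lplus_least) auto
lemma E4_least: "is_logic X \<Longrightarrow> ax4 \<in> X \<Longrightarrow> E4 \<subseteq> X"
  unfolding E4_def by (rule lplus_least) (auto dest: E_least)
lemma S04_least: "is_logic X \<Longrightarrow> ax4 \<in> X \<Longrightarrow> axT \<in> X \<Longrightarrow> axM \<in> X \<Longrightarrow> S04 \<subseteq> X"
  unfolding S04_def by (rule lplus_least) (auto dest: E4_least)
lemma EMC4_least: "is_logic X \<Longrightarrow> ax4 \<in> X \<Longrightarrow> axC \<in> X \<Longrightarrow> axM \<in> X \<Longrightarrow> EMC4 \<subseteq> X"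
  unfolding EMC4_def by (rule lplus_least) (auto dest: E4_least)

lemma ax4_E4: "ax4 \<in> E4" using lplus_sup unfolding E4_def by blast
lemma E4_S04: "E4 \<subseteq> S04" using lplus_sup unfolding S04_def by blast
lemma E4_EMC4: "E4 \<subseteq> EMC4" using lplus_sup unfolding EMC4_def by blast
lemma ax_S04: "ax4 \<in> S04" "axT \<in> S04" "axM \<in> S04"
  using lplus_sup E4_S04 ax4_E4 unfolding S04_def by blast+
lemma ax_EMC4: "ax4 \<in> EMC4" "axC \<in> EMC4" "axM \<in> EMC4"
  using lplus_sup E4_EMC4 ax4_E4 unfolding EMC4_def by blast+


locale canon =
  fixes L :: "fm set" and a0 :: fm
  assumes L: "is_logic L"
begin

definition At :: "fm set" where "At = \<Union> (atoms ` sub a0)"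

lemma finite_At: "finite At"
  unfolding At_def using finite_sub finite_atoms by blast

definition atl :: "fm list" where "atl = (SOME xs. set xs = At)"

lemma set_atl: "set atl = At"
  unfolding atl_def using finite_list[OF finite_At] by (rule someI_ex)

definition chi :: "fm set \<Rightarrow> fm" where
  "chi S = cj (map (\<lambda>x. if x \<in> S then x else Neg x) atl)"

lemma peval_chi: "peval v (chi S) = (\<forall>x\<in>At. v x = (x \<in> S))"
proof -
  have "peval v x = v x" if xA: "x \<in> At" for x
  proof -
    obtain b where "x \<in> atoms b" using xA unfolding At_def by blast
    then show ?thesis by (rule atoms_atom)
  qed
  then have "\<forall>x\<in>At. peval v (if x \<in> S then x else Neg x) = (v x = (x \<in> S))" by auto
  moreover have "peval v (chi S) = (\<forall>x\<in>At. peval v (if x \<in> S then x else Neg x))"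
    unfolding chi_def peval_cj set_map set_atl by blast
  ultimately show ?thesis by simp
qed

definition Wc :: "fm set set" where "Wc = {S. S \<subseteq> At \<and> Neg (chi S) \<notin> L}"

lemma finite_Wc: "finite Wc"
proof -
  have "Wc \<subseteq> Pow At" unfolding Wc_def by blast
  then show ?thesis using finite_At finite_subset by blast
qed

definition ext :: "fm \<Rightarrow> fm set set" where "ext \<phi> = {S \<in> Wc. peval (\<lambda>x. x \<in> S) \<phi>}"

lemma ext_sub: "ext \<phi> \<subseteq> Wc" unfolding ext_def by blast

lemma K1:
  assumes "\<phi> \<in> L" "atoms \<phi> \<subseteq> At"
  shows "ext \<phi> = Wc"
proof -
  have "peval (\<lambda>x. x \<in> S) \<phi>" if S: "S \<in> Wc" for S
  proof (rule ccontr)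
    assume np: "\<not> peval (\<lambda>x. x \<in> S) \<phi>"
    have "Neg (chi S) \<in> L"
    proof (rule lderiv[OF L, of "[\<phi>]"])
      show "set [\<phi>] \<subseteq> L" using assms by simp
      fix v assume "\<forall>p\<in>set [\<phi>]. peval v p"
      then have pv: "peval v \<phi>" by simp
      show "peval v (Neg (chi S))"
        unfolding peval.simps
      proof
        assume "peval v (chi S)"
        then have "\<forall>x\<in>At. v x = (x \<in> S)" by (simp add: peval_chi)
        then have "peval v \<phi> = peval (\<lambda>x. x \<in> S) \<phi>"
          using assms(2) by (intro peval_atoms) blast
        then show False using pv np by simp
      qed
    qed
    then show False using S unfolding Wc_def by blast
  qed
  then show ?thesis unfolding ext_def by blast
qed

lemma K2:
  assumes at: "atoms \<phi> \<subseteq> At" and ex: "ext \<phi> = Wc"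
  shows "\<phi> \<in> L"
proof -
  define bad where "bad = {S. S \<subseteq> At \<and> \<not> peval (\<lambda>x. x \<in> S) \<phi>}"
  have "finite bad" using finite_At unfolding bad_def by (rule rev_finite_subset[OF finite_Pow_iff[THEN iffD2]]) blast
  then obtain bl where bl: "set bl = bad" using finite_list by blast
  have badL: "Neg (chi S) \<in> L" if "S \<in> bad" for S
  proof (rule ccontr)
    assume "Neg (chi S) \<notin> L"
    then have "S \<in> Wc" using that unfolding bad_def Wc_def by blast
    then have "S \<in> ext \<phi>" using ex by blast
    then show False using that unfolding bad_def ext_def by blast
  qed
  show ?thesis
  proof (rule lderiv[OF L, of "map (\<lambda>S. Neg (chi S)) bl"])
    show "set (map (\<lambda>S. Neg (chi S)) bl) \<subseteq> L" using badL bl by auto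
    fix v assume h: "\<forall>p\<in>set (map (\<lambda>S. Neg (chi S)) bl). peval v p"
    define S0 where "S0 = {x \<in> At. v x}"
    have "peval v (chi S0)" unfolding peval_chi S0_def by blast
    then have "S0 \<notin> bad" using h bl by auto
    then have "peval (\<lambda>x. x \<in> S0) \<phi>" unfolding bad_def S0_def by blast
    moreover have "peval (\<lambda>x. x \<in> S0) \<phi> = peval v \<phi>"
      using at by (intro peval_atoms) (auto simp: S0_def)
    ultimately show "peval v \<phi>" by simp
  qed
qed

lemma imp_L:
  assumes "atoms \<phi> \<subseteq> At" "atoms \<psi> \<subseteq> At"
  shows "Imp \<phi> \<psi> \<in> L \<longleftrightarrow> ext \<phi> \<subseteq> ext \<psi>"
proof -
  have "ext (Imp \<phi> \<psi>) = Wc \<longleftrightarrow> ext \<phi> \<subseteq> ext \<psi>" unfolding ext_def by auto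
  then show ?thesis using K1[of "Imp \<phi> \<psi>"] K2[of "Imp \<phi> \<psi>"] assms by auto
qed

lemma iff_L:
  assumes "atoms \<phi> \<subseteq> At" "atoms \<psi> \<subseteq> At"
  shows "Iff \<phi> \<psi> \<in> L \<longleftrightarrow> ext \<phi> = ext \<psi>"
proof -
  have "ext (Iff \<phi> \<psi>) = Wc \<longleftrightarrow> ext \<phi> = ext \<psi>" unfolding ext_def by auto
  then show ?thesis using K1[of "Iff \<phi> \<psi>"] K2[of "Iff \<phi> \<psi>"] assms by auto
qed

lemma at_sub: "b \<in> sub a0 \<Longrightarrow> atoms b \<subseteq> At" unfolding At_def by blast

lemma sub_Box: "Box d \<in> sub a0 \<Longrightarrow> d \<in> sub a0"
  using sub_trans sub_refl by fastforce

definition V0 :: "nat \<Rightarrow> fm set set" where "V0 p = {S \<in> Wc. Var p \<in> S}"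

lemma truth:
  assumes hb: "\<And>d. Box d \<in> sub a0 \<Longrightarrow> B (ext d) = ext (Box d)"
  shows "b \<in> sub a0 \<Longrightarrow> gts Wc B V0 b = ext b"
proof (induction b)
  case (Var p) then show ?case by (simp add: V0_def ext_def)
next
  case (Neg b)
  then have "b \<in> sub a0" using sub_trans sub_refl by fastforce
  then show ?case using Neg.IH by (auto simp: ext_def)
next
  case (Conj b c)
  then have "b \<in> sub a0" "c \<in> sub a0" using sub_trans sub_refl by fastforce+
  then show ?case using Conj.IH by (auto simp: ext_def)
next
  case (Box b)
  from Box.prems have "b \<in> sub a0" by (rule sub_Box)
  then show ?case using Box.IH hb[OF Box.prems] by simp
qed

lemma refut_lem:
  assumes na: "a0 \<notin> L"
    and hb: "\<And>d. Box d \<in> sub a0 \<Longrightarrow> B (ext d) = ext (Box d)"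
  shows "Wc \<noteq> {} \<and> \<not> gvalid Wc B a0"
proof -
  have ne: "ext a0 \<noteq> Wc" using K2[OF at_sub[OF sub_refl]] na by blast
  have "gts Wc B V0 a0 = ext a0" by (rule truth[OF hb sub_refl])
  moreover have "\<forall>p. V0 p \<subseteq> Wc" unfolding V0_def by blast
  ultimately have "\<not> gvalid Wc B a0" using ne unfolding gvalid_def by metis
  moreover have "Wc \<noteq> {}" using ne ext_sub by blast
  ultimately show ?thesis by blast
qed

end


context canon
begin

definition B4 :: "fm set set \<Rightarrow> fm set set" where
  "B4 X = (if \<exists>d. Box d \<in> sub a0 \<and> X = ext d
           then ext (Box (SOME d. Box d \<in> sub a0 \<and> X = ext d)) else X)"

lemma B4_frame: "X \<subseteq> Wc \<Longrightarrow> B4 X \<subseteq> Wc"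
  unfolding B4_def using ext_sub by auto

lemma B4_truth:
  assumes bd: "Box d \<in> sub a0"
  shows "B4 (ext d) = ext (Box d)"
proof -
  have ex: "\<exists>e. Box e \<in> sub a0 \<and> ext d = ext e" using bd by blast
  define e where "e = (SOME e. Box e \<in> sub a0 \<and> ext d = ext e)"
  have e: "Box e \<in> sub a0" "ext d = ext e" using someI_ex[OF ex] unfolding e_def by blast+
  have "Iff d e \<in> L" using iff_L[OF at_sub[OF sub_Box[OF bd]] at_sub[OF sub_Box[OF e(1)]]] e(2) by blast
  then have "Iff (Box d) (Box e) \<in> L" by (rule L_RE[OF L])
  then have 1: "ext (Box d) = ext (Box e)" using iff_L[OF at_sub[OF bd] at_sub[OF e(1)]] by blast
  have "B4 (ext d) = ext (Box e)" unfolding B4_def e_def using ex by simp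
  then show ?thesis using 1 by simp
qed

lemma B4_trans:
  assumes ax: "ax4 \<in> L" shows "B4 X \<subseteq> B4 (B4 X)"
proof (cases "\<exists>d. Box d \<in> sub a0 \<and> X = ext d")
  case True
  define d where "d = (SOME d. Box d \<in> sub a0 \<and> X = ext d)"
  have d: "Box d \<in> sub a0" "X = ext d" using someI_ex[OF True] unfolding d_def by blast+
  have BX: "B4 X = ext (Box d)" unfolding B4_def d_def using True by simp
  show ?thesis
  proof (cases "\<exists>e. Box e \<in> sub a0 \<and> ext (Box d) = ext e")
    case True2: True
    define e where "e = (SOME e. Box e \<in> sub a0 \<and> ext (Box d) = ext e)"
    have e: "Box e \<in> sub a0" "ext (Box d) = ext e" using someI_ex[OF True2] unfolding e_def by blast+
    have "B4 (ext (Box d)) = ext (Box e)" unfolding B4_def e_def using True2 by simp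
    then have BB: "B4 (B4 X) = ext (Box e)" using BX by simp
    have "Iff (Box d) e \<in> L" using iff_L[OF at_sub[OF d(1)] at_sub[OF sub_Box[OF e(1)]]] e(2) by blast
    then have 1: "Iff (Box (Box d)) (Box e) \<in> L" by (rule L_RE[OF L])
    have "Imp (Box d) (Box e) \<in> L"
      by (rule lderiv[OF L, of "[Iff (Box (Box d)) (Box e), Imp (Box d) (Box (Box d))]"])
         (use 1 inst4[OF L ax] in auto)
    then have "ext (Box d) \<subseteq> ext (Box e)" using imp_L[OF at_sub[OF d(1)] at_sub[OF e(1)]] by blast
    then show ?thesis using BX BB by simp
  next
    case False
    have "B4 (B4 X) = B4 X" unfolding BX by (simp add: B4_def False)
    then show ?thesis by simp
  qed
next
  case False
  then have "B4 X = X" unfolding B4_def by (rule if_not_P)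
  then show ?thesis using False by simp
qed

definition BS :: "fm set set \<Rightarrow> fm set set" where
  "BS X = \<Union> {ext (Box d) | d. Box d \<in> sub a0 \<and> ext (Box d) \<subseteq> X}"

lemma BS_frame: "BS X \<subseteq> Wc" unfolding BS_def using ext_sub by blast
lemma BS_T: "BS X \<subseteq> X" unfolding BS_def by blast
lemma BS_mono: "X \<subseteq> Y \<Longrightarrow> BS X \<subseteq> BS Y" unfolding BS_def by blast
lemma BS_trans: "BS X \<subseteq> BS (BS X)"
proof
  fix S assume "S \<in> BS X"
  then obtain d where d: "Box d \<in> sub a0" "ext (Box d) \<subseteq> X" "S \<in> ext (Box d)"
    unfolding BS_def by blast
  then have "ext (Box d) \<subseteq> BS X" unfolding BS_def by blast
  then show "S \<in> BS (BS X)" using d unfolding BS_def by blast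
qed

lemma BS_truth:
  assumes a4: "ax4 \<in> L" and aT: "axT \<in> L" and aM: "axM \<in> L" and bd: "Box d \<in> sub a0"
  shows "BS (ext d) = ext (Box d)"
proof
  have "ext (Box e) \<subseteq> ext (Box d)" if e: "Box e \<in> sub a0" "ext (Box e) \<subseteq> ext d" for e
  proof -
    have "Imp (Box e) d \<in> L" using imp_L[OF at_sub[OF e(1)] at_sub[OF sub_Box[OF bd]]] e(2) by blast
    then have 1: "Imp (Box (Box e)) (Box d) \<in> L" by (rule RM[OF L aM])
    have "Imp (Box e) (Box d) \<in> L"
      by (rule lderiv[OF L, of "[Imp (Box (Box e)) (Box d), Imp (Box e) (Box (Box e))]"])
         (use 1 inst4[OF L a4] in auto)
    then show ?thesis using imp_L[OF at_sub[OF e(1)] at_sub[OF bd]] by blast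
  qed
  then show "BS (ext d) \<subseteq> ext (Box d)" unfolding BS_def by blast
next
  have "Imp (Box d) d \<in> L" by (rule instT[OF L aT])
  then have "ext (Box d) \<subseteq> ext d" using imp_L[OF at_sub[OF bd] at_sub[OF sub_Box[OF bd]]] by blast
  then show "ext (Box d) \<subseteq> BS (ext d)" unfolding BS_def using bd by blast
qed

definition BM :: "fm set set \<Rightarrow> fm set set" where
  "BM X = \<Union> {ext (cj (map Box ds)) | ds. ds \<noteq> [] \<and> (\<forall>d\<in>set ds. Box d \<in> sub a0)
              \<and> ext (cj (map (\<lambda>d. Conj d (Box d)) ds)) \<subseteq> X}"

lemma BM_I:
  "ds \<noteq> [] \<Longrightarrow> \<forall>d\<in>set ds. Box d \<in> sub a0 \<Longrightarrow> ext (cj (map (\<lambda>d. Conj d (Box d)) ds)) \<subseteq> X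
   \<Longrightarrow> S \<in> ext (cj (map Box ds)) \<Longrightarrow> S \<in> BM X"
  unfolding BM_def by blast

lemma BM_E:
  assumes "S \<in> BM X"
  obtains ds where "ds \<noteq> []" "\<forall>d\<in>set ds. Box d \<in> sub a0"
    "ext (cj (map (\<lambda>d. Conj d (Box d)) ds)) \<subseteq> X" "S \<in> ext (cj (map Box ds))"
  using assms unfolding BM_def by blast

lemma BM_frame: "BM X \<subseteq> Wc" using ext_sub by (blast elim: BM_E)
lemma BM_mono: "X \<subseteq> Y \<Longrightarrow> BM X \<subseteq> BM Y" unfolding BM_def by blast

lemma ext_cj: "ext (cj xs) = {S \<in> Wc. \<forall>x\<in>set xs. peval (\<lambda>y. y \<in> S) x}"
  unfolding ext_def by simp

lemma BM_C: "BM X \<inter> BM Y \<subseteq> BM (X \<inter> Y)"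
proof
  fix S assume "S \<in> BM X \<inter> BM Y"
  then have SX: "S \<in> BM X" and SY: "S \<in> BM Y" by auto
  from SX obtain ds where
    ds: "ds \<noteq> []" "\<forall>d\<in>set ds. Box d \<in> sub a0"
      "ext (cj (map (\<lambda>d. Conj d (Box d)) ds)) \<subseteq> X" "S \<in> ext (cj (map Box ds))"
    by (rule BM_E)
  from SY obtain es where
    es: "es \<noteq> []" "\<forall>d\<in>set es. Box d \<in> sub a0"
      "ext (cj (map (\<lambda>d. Conj d (Box d)) es)) \<subseteq> Y" "S \<in> ext (cj (map Box es))"
    by (rule BM_E)
  have "ext (cj (map (\<lambda>d. Conj d (Box d)) (ds @ es)))
        = ext (cj (map (\<lambda>d. Conj d (Box d)) ds)) \<inter> ext (cj (map (\<lambda>d. Conj d (Box d)) es))"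
    unfolding ext_cj set_map set_append image_Un ball_Un by blast
  then have 1: "ext (cj (map (\<lambda>d. Conj d (Box d)) (ds @ es))) \<subseteq> X \<inter> Y" using ds(3) es(3) by blast
  have 2: "S \<in> ext (cj (map Box (ds @ es)))" using ds(4) es(4) unfolding ext_cj by auto
  show "S \<in> BM (X \<inter> Y)" by (rule BM_I[OF _ _ 1 2]) (use ds es in auto)
qed

lemma BM_trans: "BM X \<subseteq> BM (BM X)"
proof
  fix S assume "S \<in> BM X"
  then obtain ds where ds: "ds \<noteq> []" "\<forall>d\<in>set ds. Box d \<in> sub a0"
      "ext (cj (map (\<lambda>d. Conj d (Box d)) ds)) \<subseteq> X" "S \<in> ext (cj (map Box ds))"
    by (rule BM_E)
  have "ext (cj (map (\<lambda>d. Conj d (Box d)) ds)) \<subseteq> ext (cj (map Box ds))"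
    unfolding ext_cj by auto
  also have "\<dots> \<subseteq> BM X" using BM_I[OF ds(1-3)] by blast
  finally show "S \<in> BM (BM X)" by (rule BM_I[OF ds(1,2) _ ds(4)])
qed

lemma BM_truth:
  assumes a4: "ax4 \<in> L" and aC: "axC \<in> L" and aM: "axM \<in> L" and bd: "Box d0 \<in> sub a0"
  shows "BM (ext d0) = ext (Box d0)"
proof
  show "BM (ext d0) \<subseteq> ext (Box d0)"
  proof
    fix S assume "S \<in> BM (ext d0)"
    then obtain ds where ds: "ds \<noteq> []" "\<forall>d\<in>set ds. Box d \<in> sub a0"
        "ext (cj (map (\<lambda>d. Conj d (Box d)) ds)) \<subseteq> ext d0" "S \<in> ext (cj (map Box ds))"
      by (rule BM_E)
    have atCB: "atoms (cj (map (\<lambda>d. Conj d (Box d)) ds)) \<subseteq> At"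
    proof -
      have "atoms (Conj d (Box d)) \<subseteq> At" if "d \<in> set ds" for d
        using at_sub[of "Box d"] at_sub[of d] sub_Box[of d] ds(2) that by auto
      then show ?thesis using ds(1) by (auto simp: atoms_cj)
    qed
    have atB: "atoms (cj (map Box ds)) \<subseteq> At"
    proof -
      have "atoms (Box d) \<subseteq> At" if "d \<in> set ds" for d
        using at_sub[of "Box d"] ds(2) that by blast
      then show ?thesis using ds(1) by (auto simp: atoms_cj)
    qed
    let ?m = "cj ds"
    have 1: "Imp (cj (map (\<lambda>d. Conj d (Box d)) ds)) d0 \<in> L"
      using imp_L[OF atCB at_sub[OF sub_Box[OF bd]]] ds(3) by blast
    have 2: "Iff (Box ?m) (cj (map Box ds)) \<in> L" by (rule MC_cj[OF L aM aC ds(1)])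
    have 5: "Imp (Conj ?m (Box ?m)) d0 \<in> L"
      by (rule lderiv[OF L, of "[Imp (cj (map (\<lambda>d. Conj d (Box d)) ds)) d0, Iff (Box ?m) (cj (map Box ds))]"])
         (use 1 2 in auto)
    have 6: "Imp (Box (Conj ?m (Box ?m))) (Box d0) \<in> L" by (rule RM[OF L aM 5])
    have "Imp (cj (map Box ds)) (Box d0) \<in> L"
      by (rule lderiv[OF L, of "[Iff (Box ?m) (cj (map Box ds)), Imp (Box ?m) (Box (Box ?m)),
            Imp (Conj (Box ?m) (Box (Box ?m))) (Box (Conj ?m (Box ?m))),
            Imp (Box (Conj ?m (Box ?m))) (Box d0)]"])
         (use 2 6 inst4[OF L a4] instC[OF L aC] in auto)
    then have "ext (cj (map Box ds)) \<subseteq> ext (Box d0)" using imp_L[OF atB at_sub[OF bd]] by blast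
    then show "S \<in> ext (Box d0)" using ds(4) by blast
  qed
next
  show "ext (Box d0) \<subseteq> BM (ext d0)"
  proof
    fix S assume S: "S \<in> ext (Box d0)"
    show "S \<in> BM (ext d0)"
    proof (rule BM_I[of "[d0]"])
      show "ext (cj (map (\<lambda>d. Conj d (Box d)) [d0])) \<subseteq> ext d0" unfolding ext_def by auto
      show "S \<in> ext (cj (map Box [d0]))" using S by simp
    qed (use bd in auto)
  qed
qed

end

lemma fmp_E4: "has_fmp E4"
proof (rule fmp_intro)
  fix a assume na: "a \<notin> E4"
  interpret c: canon E4 a by unfold_locales (rule E4_logic)
  have fr: "\<forall>X\<subseteq>c.Wc. c.B4 X \<subseteq> c.Wc" using c.B4_frame by blast
  have r: "c.Wc \<noteq> {} \<and> \<not> gvalid c.Wc c.B4 a" by (rule c.refut_lem[OF na c.B4_truth])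
  have "E4 \<subseteq> {b. gvalid c.Wc c.B4 b}"
    by (rule E4_least[OF gvalid_logic[OF fr]]) (simp add: gvalid_ax4 c.B4_trans[OF ax4_E4])
  then show "\<exists>(W::fm set set) B. finite W \<and> W \<noteq> {} \<and> (\<forall>X\<subseteq>W. B X \<subseteq> W)
              \<and> (\<forall>b\<in>E4. gvalid W B b) \<and> \<not> gvalid W B a"
    using c.finite_Wc fr r by blast
qed

lemma fmp_S04: "has_fmp S04"
proof (rule fmp_intro)
  fix a assume na: "a \<notin> S04"
  interpret c: canon S04 a by unfold_locales (rule S04_logic)
  have fr: "\<forall>X\<subseteq>c.Wc. c.BS X \<subseteq> c.Wc" using c.BS_frame by blast
  have r: "c.Wc \<noteq> {} \<and> \<not> gvalid c.Wc c.BS a"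
    by (rule c.refut_lem[OF na c.BS_truth[OF ax_S04]])
  have "S04 \<subseteq> {b. gvalid c.Wc c.BS b}"
    by (rule S04_least[OF gvalid_logic[OF fr]])
       (simp_all add: gvalid_ax4 gvalid_axT gvalid_axM c.BS_trans c.BS_T c.BS_mono)
  then show "\<exists>(W::fm set set) B. finite W \<and> W \<noteq> {} \<and> (\<forall>X\<subseteq>W. B X \<subseteq> W)
              \<and> (\<forall>b\<in>S04. gvalid W B b) \<and> \<not> gvalid W B a"
    using c.finite_Wc fr r by blast
qed

lemma fmp_EMC4: "has_fmp EMC4"
proof (rule fmp_intro)
  fix a assume na: "a \<notin> EMC4"
  interpret c: canon EMC4 a by unfold_locales (rule EMC4_logic)
  have fr: "\<forall>X\<subseteq>c.Wc. c.BM X \<subseteq> c.Wc" using c.BM_frame by blast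
  have r: "c.Wc \<noteq> {} \<and> \<not> gvalid c.Wc c.BM a"
    by (rule c.refut_lem[OF na c.BM_truth[OF ax_EMC4]])
  have "EMC4 \<subseteq> {b. gvalid c.Wc c.BM b}"
    by (rule EMC4_least[OF gvalid_logic[OF fr]])
       (simp_all add: gvalid_ax4 gvalid_axC gvalid_axM c.BM_trans c.BM_C c.BM_mono)
  then show "\<exists>(W::fm set set) B. finite W \<and> W \<noteq> {} \<and> (\<forall>X\<subseteq>W. B X \<subseteq> W)
              \<and> (\<forall>b\<in>EMC4. gvalid W B b) \<and> \<not> gvalid W B a"
    using c.finite_Wc fr r by blast
qed

theorem mainTheorem2:
  shows "has_fmp E4 \<and> has_fmp S04 \<and> has_fmp EMC4"
  using fmp_E4 fmp_S04 fmp_EMC4 by blast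

end
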